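(* Let $\alpha=(\alpha_1,\dots,\alpha_n)$ and $\beta=(\beta_1,\dots,\beta_n)$ be two probability vectors on $n$ points (in the paper $\alpha_i=P_F(u_i\mid s)$, $\beta_i=P_F(v_i\mid s')$), and let $\mathbf{C}'\in\mathbb{R}^{n\times n}$ be a diagonal matrix with $\mathbf{C}'_{ii}\le 0$ for all $i$. Then $$\min_{\pi\in\Pi(\alpha,\beta)}\langle\mathbf{C}',\pi\rangle=\sum_{i=1}^n\min(\alpha_i,\beta_i)\,\mathbf{C}'_{ii},$$ where $\Pi(\alpha,\beta)=\{\pi\in\mathbb{R}_{+}^{n\times n}:\pi\mathbf{1}_n=\alpha,\ \pi^{\top}\mathbf{1}_n=\beta\}$ and $\langle\mathbf{C}',\pi\rangle=\sum_{i,j}\mathbf{C}'_{ij}\pi_{ij}$. *)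

theory Defs
  imports Complex_Main
begin

text \<open>Vectors in R^n are functions nat => real read on indices 0..n-1;
n x n matrices are functions nat => nat => real read on indices below n.\<close>

definition prob_vec :: "nat \<Rightarrow> (nat \<Rightarrow> real) \<Rightarrow> bool" where
  "prob_vec n a \<longleftrightarrow> (\<forall>i<n. a i \<ge> 0) \<and> (\<Sum>i<n. a i) = 1"

definition couplings :: "nat \<Rightarrow> (nat \<Rightarrow> real) \<Rightarrow> (nat \<Rightarrow> real) \<Rightarrow> (nat \<Rightarrow> nat \<Rightarrow> real) set" where
  "couplings n a b = {p. (\<forall>i<n. \<forall>j<n. p i j \<ge> 0) \<and>
      (\<forall>i<n. (\<Sum>j<n. p i j) = a i) \<and> (\<forall>j<n. (\<Sum>i<n. p i j) = b j)}"

definition frob :: "nat \<Rightarrow> (nat \<Rightarrow> nat \<Rightarrow> real) \<Rightarrow> (nat \<Rightarrow> nat \<Rightarrow> real) \<Rightarrow> real" where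
  "frob n C p = (\<Sum>i<n. \<Sum>j<n. C i j * p i j)"

end

theory Submission
  imports Defs
begin

lemma frob_diag:
  assumes "\<forall>i<n. \<forall>j<n. i \<noteq> j \<longrightarrow> C i j = 0"
  shows "frob n C p = (\<Sum>i<n. C i i * p i i)"
  unfolding frob_def
proof (rule sum.cong[OF refl])
  fix i assume i: "i \<in> {..<n}"
  have "(\<Sum>j<n. C i j * p i j) = (\<Sum>j\<in>{i}. C i j * p i j)"
    by (rule sum.mono_neutral_right) (use i assms in auto)
  then show "(\<Sum>j<n. C i j * p i j) = C i i * p i i" by simp
qed

theorem lemma1:
  fixes n :: nat and a b :: "nat \<Rightarrow> real" and C :: "nat \<Rightarrow> nat \<Rightarrow> real"
  assumes "prob_vec n a" and "prob_vec n b"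
    and "\<forall>i<n. \<forall>j<n. i \<noteq> j \<longrightarrow> C i j = 0"
    and "\<forall>i<n. C i i \<le> 0"
  shows "(\<exists>p\<in>couplings n a b. frob n C p = (\<Sum>i<n. min (a i) (b i) * C i i))
       \<and> (\<forall>p\<in>couplings n a b. (\<Sum>i<n. min (a i) (b i) * C i i) \<le> frob n C p)"
proof
  have a0: "\<forall>i<n. a i \<ge> 0" and a1: "(\<Sum>i<n. a i) = 1"
    using assms(1) unfolding prob_vec_def by auto
  have b0: "\<forall>i<n. b i \<ge> 0" and b1: "(\<Sum>i<n. b i) = 1"
    using assms(2) unfolding prob_vec_def by auto
  define m where "m i = min (a i) (b i)" for i
  define r where "r i = a i - m i" for i
  define s where "s i = b i - m i" for i
  define R where "R = (\<Sum>i<n. r i)"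
  have r0: "r i \<ge> 0" for i unfolding r_def m_def by auto
  have s0: "s i \<ge> 0" for i unfolding s_def m_def by auto
  have rs: "r i * s i = 0" for i unfolding r_def s_def m_def by auto
  have RS: "(\<Sum>i<n. s i) = R"
    unfolding R_def r_def s_def sum_subtractf a1 b1 by simp
  have rowr: "r i * (\<Sum>j<n. s j) / R = r i" if "i < n" for i
  proof (cases "R = 0")
    case True
    have "\<forall>k\<in>{..<n}. r k = 0"
      using True unfolding R_def by (subst sum_nonneg_eq_0_iff[symmetric]) (auto intro: r0)
    then show ?thesis using that by simp
  next
    case False then show ?thesis using RS by simp
  qed
  have cols: "(\<Sum>i<n. r i) * s j / R = s j" if "j < n" for j
  proof (cases "R = 0")
    case True
    have "\<forall>k\<in>{..<n}. s k = 0"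
      using True RS by (subst sum_nonneg_eq_0_iff[symmetric]) (auto intro: s0)
    then show ?thesis using that by simp
  next
    case False then show ?thesis unfolding R_def[symmetric] by simp
  qed
  define p where "p i j = (if i = j then m i else 0) + r i * s j / R" for i j
  have Rn: "R \<ge> 0" unfolding R_def by (rule sum_nonneg) (use r0 in auto)
  have "p \<in> couplings n a b"
    unfolding couplings_def
  proof (intro CollectI conjI allI impI)
    fix i j assume "i < n" "j < n"
    then show "0 \<le> p i j" unfolding p_def m_def using a0 b0 r0 s0 Rn
      by (auto intro!: add_nonneg_nonneg divide_nonneg_nonneg mult_nonneg_nonneg)
  next
    fix i assume i: "i < n"
    have "(\<Sum>j<n. p i j) = (\<Sum>j<n. (if i = j then m i else 0)) + (\<Sum>j<n. r i * s j / R)"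
      unfolding p_def by (simp add: sum.distrib)
    also have "\<dots> = m i + r i * (\<Sum>j<n. s j) / R"
      using i by (simp add: sum_divide_distrib[symmetric] sum_distrib_left)
    also have "\<dots> = a i" using rowr[OF i] unfolding r_def by simp
    finally show "(\<Sum>j<n. p i j) = a i" .
  next
    fix j assume j: "j < n"
    have "(\<Sum>i<n. p i j) = (\<Sum>i<n. (if i = j then m i else 0)) + (\<Sum>i<n. r i * s j / R)"
      unfolding p_def by (simp add: sum.distrib)
    also have "\<dots> = m j + (\<Sum>i<n. r i) * s j / R"
      using j by (simp add: sum_divide_distrib[symmetric] sum_distrib_right)
    also have "\<dots> = b j" using cols[OF j] unfolding s_def by simp
    finally show "(\<Sum>i<n. p i j) = b j" .
  qed
  moreover have "frob n C p = (\<Sum>i<n. min (a i) (b i) * C i i)"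
    unfolding frob_diag[OF assms(3)] p_def
  proof (rule sum.cong[OF refl])
    fix i show "C i i * ((if i = i then m i else 0) + r i * s i / R) = min (a i) (b i) * C i i"
      using rs[of i] by (simp add: m_def mult.commute)
  qed
  ultimately show "\<exists>p\<in>couplings n a b. frob n C p = (\<Sum>i<n. min (a i) (b i) * C i i)"
    by blast
next
  show "\<forall>p\<in>couplings n a b. (\<Sum>i<n. min (a i) (b i) * C i i) \<le> frob n C p"
  proof
    fix p assume p: "p \<in> couplings n a b"
    have le: "p i i \<le> min (a i) (b i)" if i: "i < n" for i
    proof -
      have "p i i = (\<Sum>j\<in>{i}. p i j)" by simp
      also have "\<dots> \<le> (\<Sum>j<n. p i j)"
        by (rule sum_mono2) (use i p in \<open>auto simp: couplings_def\<close>)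
      finally have 1: "p i i \<le> a i" using i p by (simp add: couplings_def)
      have "p i i = (\<Sum>k\<in>{i}. p k i)" by simp
      also have "\<dots> \<le> (\<Sum>k<n. p k i)"
        by (rule sum_mono2) (use i p in \<open>auto simp: couplings_def\<close>)
      finally have 2: "p i i \<le> b i" using i p by (simp add: couplings_def)
      show ?thesis using 1 2 by simp
    qed
    show "(\<Sum>i<n. min (a i) (b i) * C i i) \<le> frob n C p"
      unfolding frob_diag[OF assms(3)]
    proof (rule sum_mono)
      fix i assume "i \<in> {..<n}"
      then have "i < n" by simp
      then show "min (a i) (b i) * C i i \<le> C i i * p i i"
        using le[of i] assms(4) by (simp add: mult.commute mult_left_mono_neg)
    qed
  qed
qed

end
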